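(* If $F$ is a bounded below semi-free DG $B$-module with semi-basis $G$, then $F\cong N$ for some appropriate choices of $R$-module homomorphisms $\xi_i$, $\tau_i$, $\alpha_i$, and $\delta_i$ satisfying, for all integers $i$ and $j$, $\xi_i=-\alpha_i$, $\tau_i=t$, $\alpha_{i-1}\alpha_i=-t\delta_i$, $\delta_i\alpha_{i+1}=\alpha_{i-1}\delta_{i+1}$, $\delta_{i+j}(\gamma_{i,s} m_j)=\gamma_{i,s} \delta_j(m_j)$, and $\alpha_{i+j}(\gamma_{i,s} m_j)=\partial_i^A(\gamma_{i,s})m_j+(-1)^i\gamma_{i,s}\alpha_j(m_j)$ for $s=1,\ldots,r_i$ and all $m_j\in M_j$, where $\beta_i=|G\cap F_i|$.
   Context: Let $R$ be a commutative noetherian ring. Let $A$ be a (commutative, positively graded) DG $R$-algebra such that each $A_i$ is free over $R$ of finite rank, with fixed basis $\{\gamma_{i,1},\ldots,\gamma_{i,r_i}\}$ of $A_i$. Let $t\in R$ and $B=K^R(t)\otimes_R A$, where $K^R(t)$ is the Koszul complex on $t$; identify $B_i$ with $A_{i-1}\oplus A_i$ (column vectors), so that $\partial^B_i=\left[\begin{smallmatrix}-\partial^A_{i-1} & 0\\ t & \partial^A_i\end{smallmatrix}\right]$. For cardinals $\beta_i$ ($\beta_i=0$ for $i\ll0$) set $M_i=\bigoplus_{j\ge0}A_j^{(\beta_{i-j})}$. Given $R$-linear maps $\xi_i\colon M_i\to M_{i-1}$, $\tau_i\colon M_i\to M_i$, $\delta_i\colon M_i\to M_{i-2}$, $\alpha_i\colon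 M_i\to M_{i-1}$, let $N$ be the sequence with $N_i=M_{i-1}\oplus M_i$ and $\partial^N_i=\left[\begin{smallmatrix}\xi_{i-1}&\delta_i\\ \tau_{i-1}&\alpha_i\end{smallmatrix}\right]$, with $B$ acting by $\left[\begin{smallmatrix}a_{i-1}\\ a_i\end{smallmatrix}\right]\left[\begin{smallmatrix}m_{j-1}\\ m_j\end{smallmatrix}\right]=\left[\begin{smallmatrix}a_{i-1}m_j+(-1)^ia_im_{j-1}\\ a_im_j\end{smallmatrix}\right]$. *)

theory Defs
  imports Main "HOL.Modules" "HOL-Library.Function_Algebras" "HOL-Library.Product_Plus"
begin

text \<open>All graded objects are represented by families of homogeneous
components (indexed by int) sitting inside an ambient abelian group carrying an
R-module structure (HOL locale module).\<close>

definition alt :: "int \<Rightarrow> 'x::ab_group_add \<Rightarrow> 'x" where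
  "alt i x = (if even i then x else - x)"

definition noetherian_ring_type :: "'r::comm_ring_1 itself \<Rightarrow> bool" where
  "noetherian_ring_type _ \<longleftrightarrow>
     (\<forall>I::'r set. (0 \<in> I \<and> (\<forall>x\<in>I. \<forall>y\<in>I. x + y \<in> I) \<and> (\<forall>c. \<forall>x\<in>I. c * x \<in> I))
        \<longrightarrow> (\<exists>S. finite S \<and> S \<subseteq> I \<and> I = {\<Sum>s\<in>S. c s * s | c. True}))"

definition graded_module ::
  "('r::comm_ring_1 \<Rightarrow> 'x::ab_group_add \<Rightarrow> 'x) \<Rightarrow> (int \<Rightarrow> 'x set) \<Rightarrow> bool" where
  "graded_module sc C \<longleftrightarrow> module sc \<and> (\<forall>i. module.subspace sc (C i))
      \<and> (\<forall>i j. i \<noteq> j \<longrightarrow> C i \<inter> C j \<subseteq> {0})"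

definition lin_on ::
  "('r \<Rightarrow> 'x::ab_group_add \<Rightarrow> 'x) \<Rightarrow> 'x set \<Rightarrow> ('r \<Rightarrow> 'y::ab_group_add \<Rightarrow> 'y) \<Rightarrow> 'y set
    \<Rightarrow> ('x \<Rightarrow> 'y) \<Rightarrow> bool" where
  "lin_on sx X sy Y f \<longleftrightarrow> (\<forall>x\<in>X. f x \<in> Y) \<and> (\<forall>x\<in>X. \<forall>y\<in>X. f (x + y) = f x + f y)
      \<and> (\<forall>c. \<forall>x\<in>X. f (sx c x) = sy c (f x))"

definition dg_algebra ::
  "('r::comm_ring_1 \<Rightarrow> 'a::ab_group_add \<Rightarrow> 'a) \<Rightarrow> (int \<Rightarrow> 'a set) \<Rightarrow> ('a \<Rightarrow> 'a \<Rightarrow> 'a)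
     \<Rightarrow> 'a \<Rightarrow> ('a \<Rightarrow> 'a) \<Rightarrow> bool" where
  "dg_algebra sc A mul one d \<longleftrightarrow>
     graded_module sc A \<and> (\<forall>i<0. A i = {0}) \<and> one \<in> A 0
     \<and> (\<forall>i j. \<forall>x\<in>A i. \<forall>y\<in>A j. mul x y \<in> A (i + j))
     \<and> (\<forall>i j. \<forall>x\<in>A i. \<forall>x'\<in>A i. \<forall>y\<in>A j. mul (x + x') y = mul x y + mul x' y)
     \<and> (\<forall>i j. \<forall>x\<in>A i. \<forall>y\<in>A j. \<forall>y'\<in>A j. mul x (y + y') = mul x y + mul x y')
     \<and> (\<forall>i j c. \<forall>x\<in>A i. \<forall>y\<in>A j. mul (sc c x) y = sc c (mul x y) \<and> mul x (sc c y) = sc c (mul x y))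
     \<and> (\<forall>i j k. \<forall>x\<in>A i. \<forall>y\<in>A j. \<forall>z\<in>A k. mul (mul x y) z = mul x (mul y z))
     \<and> (\<forall>i. \<forall>x\<in>A i. mul one x = x \<and> mul x one = x)
     \<and> (\<forall>i j. \<forall>x\<in>A i. \<forall>y\<in>A j. mul x y = alt (i * j) (mul y x))
     \<and> (\<forall>i. odd i \<longrightarrow> (\<forall>x\<in>A i. mul x x = 0))
     \<and> (\<forall>i. lin_on sc (A i) sc (A (i - 1)) d)
     \<and> (\<forall>i. \<forall>x\<in>A i. d (d x) = 0)
     \<and> (\<forall>i j. \<forall>x\<in>A i. \<forall>y\<in>A j. d (mul x y) = mul (d x) y + alt i (mul x (d y)))"

definition fixed_free_bases ::
  "('r::comm_ring_1 \<Rightarrow> 'a::ab_group_add \<Rightarrow> 'a) \<Rightarrow> (int \<Rightarrow> 'a set) \<Rightarrow> (int \<Rightarrow> nat)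
     \<Rightarrow> (int \<Rightarrow> nat \<Rightarrow> 'a) \<Rightarrow> bool" where
  "fixed_free_bases sc A r gam \<longleftrightarrow>
     (\<forall>i. inj_on (gam i) {..<r i} \<and> module.independent sc (gam i ` {..<r i})
          \<and> module.span sc (gam i ` {..<r i}) = A i)"

text \<open>B = K^R(t) tensor A, with B_i = A_(i-1) (+) A_i as pairs.\<close>
definition Bc :: "(int \<Rightarrow> 'a set) \<Rightarrow> int \<Rightarrow> ('a \<times> 'a) set" where
  "Bc A i = A (i - 1) \<times> A i"

definition bscale :: "('r \<Rightarrow> 'a \<Rightarrow> 'a) \<Rightarrow> 'r \<Rightarrow> 'a \<times> 'a \<Rightarrow> 'a \<times> 'a" where
  "bscale sc c b = (sc c (fst b), sc c (snd b))"

text \<open>product of b in B_i with b' (e^2 = 0, e deg 1).\<close>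
definition bmul :: "('a::ab_group_add \<Rightarrow> 'a \<Rightarrow> 'a) \<Rightarrow> int \<Rightarrow> 'a \<times> 'a \<Rightarrow> 'a \<times> 'a \<Rightarrow> 'a \<times> 'a" where
  "bmul mul i b b' = (mul (fst b) (snd b') + alt i (mul (snd b) (fst b')), mul (snd b) (snd b'))"

definition bdiff :: "('r \<Rightarrow> 'a::ab_group_add \<Rightarrow> 'a) \<Rightarrow> ('a \<Rightarrow> 'a) \<Rightarrow> 'r \<Rightarrow> 'a \<times> 'a \<Rightarrow> 'a \<times> 'a" where
  "bdiff sc d t b = (- d (fst b), sc t (fst b) + d (snd b))"

definition dg_B_module ::
  "('r::comm_ring_1 \<Rightarrow> 'a::ab_group_add \<Rightarrow> 'a) \<Rightarrow> (int \<Rightarrow> 'a set) \<Rightarrow> ('a \<Rightarrow> 'a \<Rightarrow> 'a)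
     \<Rightarrow> 'a \<Rightarrow> ('a \<Rightarrow> 'a) \<Rightarrow> 'r
     \<Rightarrow> ('r \<Rightarrow> 'f::ab_group_add \<Rightarrow> 'f) \<Rightarrow> (int \<Rightarrow> 'f set) \<Rightarrow> ('f \<Rightarrow> 'f) \<Rightarrow> ('a \<times> 'a \<Rightarrow> 'f \<Rightarrow> 'f)
     \<Rightarrow> bool" where
  "dg_B_module sA A mul one dA t sF F dF act \<longleftrightarrow>
     graded_module sF F
     \<and> (\<forall>i j. \<forall>b\<in>Bc A i. \<forall>m\<in>F j. act b m \<in> F (i + j))
     \<and> (\<forall>i j. \<forall>b\<in>Bc A i. \<forall>b'\<in>Bc A i. \<forall>m\<in>F j. act (b + b') m = act b m + act b' m)
     \<and> (\<forall>i j. \<forall>b\<in>Bc A i. \<forall>m\<in>F j. \<forall>m'\<in>F j. act b (m + m') = act b m + act b m')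
     \<and> (\<forall>i j c. \<forall>b\<in>Bc A i. \<forall>m\<in>F j.
           act (bscale sA c b) m = sF c (act b m) \<and> act b (sF c m) = sF c (act b m))
     \<and> (\<forall>j. \<forall>m\<in>F j. act (0, one) m = m)
     \<and> (\<forall>i j k. \<forall>b\<in>Bc A i. \<forall>b'\<in>Bc A j. \<forall>m\<in>F k. act (bmul mul i b b') m = act b (act b' m))
     \<and> (\<forall>i. lin_on sF (F i) sF (F (i - 1)) dF)
     \<and> (\<forall>i. \<forall>m\<in>F i. dF (dF m) = 0)
     \<and> (\<forall>i j. \<forall>b\<in>Bc A i. \<forall>m\<in>F j.
           dF (act b m) = act (bdiff sA dA t b) m + alt i (act b (dF m)))"

definition bounded_below :: "(int \<Rightarrow> 'f::zero set) \<Rightarrow> bool" where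
  "bounded_below F \<longleftrightarrow> (\<exists>n. \<forall>i<n. F i = {0})"

definition semi_basis ::
  "(int \<Rightarrow> 'a::ab_group_add set) \<Rightarrow> (int \<Rightarrow> 'f::ab_group_add set) \<Rightarrow> ('a \<times> 'a \<Rightarrow> 'f \<Rightarrow> 'f)
     \<Rightarrow> 'f set \<Rightarrow> bool" where
  "semi_basis A F act G \<longleftrightarrow>
     (\<forall>g\<in>G. \<exists>k. g \<in> F k)
     \<and> (\<forall>n. \<forall>x\<in>F n. \<exists>c. finite {g\<in>G. c g \<noteq> 0} \<and> (\<forall>k. \<forall>g\<in>G \<inter> F k. c g \<in> Bc A (n - k))
            \<and> x = (\<Sum>g\<in>{g\<in>G. c g \<noteq> 0}. act (c g) g))
     \<and> (\<forall>n c. finite {g\<in>G. c g \<noteq> 0} \<and> (\<forall>k. \<forall>g\<in>G \<inter> F k. c g \<in> Bc A (n - k))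
            \<and> (\<Sum>g\<in>{g\<in>G. c g \<noteq> 0}. act (c g) g) = 0 \<longrightarrow> (\<forall>g\<in>G. c g = 0))"

text \<open>M_i = (+)_j A_j^(G \<inter> F_(i-j)), elements are finitely supported functions on G.\<close>
definition Mset :: "(int \<Rightarrow> 'a::zero set) \<Rightarrow> (int \<Rightarrow> 'f set) \<Rightarrow> 'f set \<Rightarrow> int \<Rightarrow> ('f \<Rightarrow> 'a) set" where
  "Mset A F G i = {m. finite {g. m g \<noteq> 0} \<and> (\<forall>g. m g \<noteq> 0 \<longrightarrow> g \<in> G)
                      \<and> (\<forall>k. \<forall>g\<in>G \<inter> F k. m g \<in> A (i - k))}"

definition mscale :: "('r \<Rightarrow> 'a \<Rightarrow> 'a) \<Rightarrow> 'r \<Rightarrow> ('f \<Rightarrow> 'a) \<Rightarrow> ('f \<Rightarrow> 'a)" where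
  "mscale sc c m = (\<lambda>g. sc c (m g))"

definition amul :: "('a \<Rightarrow> 'a \<Rightarrow> 'a) \<Rightarrow> 'a \<Rightarrow> ('f \<Rightarrow> 'a) \<Rightarrow> ('f \<Rightarrow> 'a)" where
  "amul mul a m = (\<lambda>g. mul a (m g))"

definition Nset :: "(int \<Rightarrow> 'a::zero set) \<Rightarrow> (int \<Rightarrow> 'f set) \<Rightarrow> 'f set \<Rightarrow> int
     \<Rightarrow> (('f \<Rightarrow> 'a) \<times> ('f \<Rightarrow> 'a)) set" where
  "Nset A F G i = Mset A F G (i - 1) \<times> Mset A F G i"

definition nscale :: "('r \<Rightarrow> 'a \<Rightarrow> 'a) \<Rightarrow> 'r \<Rightarrow> ('f \<Rightarrow> 'a) \<times> ('f \<Rightarrow> 'a) \<Rightarrow> ('f \<Rightarrow> 'a) \<times> ('f \<Rightarrow> 'a)" where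
  "nscale sc c n = (mscale sc c (fst n), mscale sc c (snd n))"

definition ndiff :: "(int \<Rightarrow> 'm \<Rightarrow> 'm::plus) \<Rightarrow> (int \<Rightarrow> 'm \<Rightarrow> 'm) \<Rightarrow> (int \<Rightarrow> 'm \<Rightarrow> 'm)
     \<Rightarrow> (int \<Rightarrow> 'm \<Rightarrow> 'm) \<Rightarrow> int \<Rightarrow> 'm \<times> 'm \<Rightarrow> 'm \<times> 'm" where
  "ndiff xi tau delta alpha i n =
     (xi (i - 1) (fst n) + delta i (snd n), tau (i - 1) (fst n) + alpha i (snd n))"

definition nact :: "('a::ab_group_add \<Rightarrow> 'a \<Rightarrow> 'a) \<Rightarrow> int \<Rightarrow> 'a \<times> 'a
     \<Rightarrow> ('f \<Rightarrow> 'a) \<times> ('f \<Rightarrow> 'a) \<Rightarrow> ('f \<Rightarrow> 'a) \<times> ('f \<Rightarrow> 'a)" where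
  "nact mul i b n = (amul mul (fst b) (snd n) + alt i (amul mul (snd b) (fst n)),
                     amul mul (snd b) (snd n))"

end

theory Submission
  imports Defs begin

lemma alt_alt[simp]: "alt i (alt i x) = x" by (simp add: alt_def)
lemma alt_zero[simp]: "alt i 0 = 0" by (simp add: alt_def)
lemma alt_0[simp]: "alt 0 x = x" by (simp add: alt_def)
lemma alt_1[simp]: "alt 1 x = - x" by (simp add: alt_def)
lemma alt_pair: "alt i (a, b) = (alt i a, alt i b)" by (simp add: alt_def)
lemma alt_fun: "alt i f g = alt i (f g)" by (simp add: alt_def)
lemma alt_fst: "fst (alt i p) = alt i (fst p)" by (simp add: alt_def)
lemma alt_snd: "snd (alt i p) = alt i (snd p)" by (simp add: alt_def)
lemma alt_minus1: "alt (i - 1) x = - alt i x" by (simp add: alt_def)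

locale L =
  fixes sA :: "'r::comm_ring_1 \<Rightarrow> 'a::ab_group_add \<Rightarrow> 'a"
    and A :: "int \<Rightarrow> 'a set" and mul :: "'a \<Rightarrow> 'a \<Rightarrow> 'a" and one :: 'a and dA :: "'a \<Rightarrow> 'a"
    and t :: 'r
    and sF :: "'r \<Rightarrow> 'f::ab_group_add \<Rightarrow> 'f" and F :: "int \<Rightarrow> 'f set" and dF :: "'f \<Rightarrow> 'f"
    and act :: "'a \<times> 'a \<Rightarrow> 'f \<Rightarrow> 'f" and G :: "'f set"
  assumes modA: "module sA"
  and A_sub: "\<And>i. module.subspace sA (A i)"
  and A_neg_deg': "\<forall>i<0. A i = {0}"
  and one_A: "one \<in> A 0"
  and mul_A': "\<forall>i j. \<forall>x\<in>A i. \<forall>y\<in>A j. mul x y \<in> A (i + j)"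
  and mul_addL': "\<forall>i j. \<forall>x\<in>A i. \<forall>x'\<in>A i. \<forall>y\<in>A j. mul (x + x') y = mul x y + mul x' y"
  and mul_addR': "\<forall>i j. \<forall>x\<in>A i. \<forall>y\<in>A j. \<forall>y'\<in>A j. mul x (y + y') = mul x y + mul x y'"
  and mul_scale': "\<forall>i j c. \<forall>x\<in>A i. \<forall>y\<in>A j. mul (sA c x) y = sA c (mul x y) \<and> mul x (sA c y) = sA c (mul x y)"
  and mul_assoc': "\<forall>i j k. \<forall>x\<in>A i. \<forall>y\<in>A j. \<forall>z\<in>A k. mul (mul x y) z = mul x (mul y z)"
  and mul_one': "\<forall>i. \<forall>x\<in>A i. mul one x = x \<and> mul x one = x"
  and dA_lin': "\<forall>i. lin_on sA (A i) sA (A (i - 1)) dA"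
  and dA_leib': "\<forall>i j. \<forall>x\<in>A i. \<forall>y\<in>A j. dA (mul x y) = mul (dA x) y + alt i (mul x (dA y))"
  and modF: "module sF"
  and F_sub: "\<And>i. module.subspace sF (F i)"
  and act_F: "\<forall>i j. \<forall>b\<in>Bc A i. \<forall>m\<in>F j. act b m \<in> F (i + j)"
  and act_addL': "\<forall>i j. \<forall>b\<in>Bc A i. \<forall>b'\<in>Bc A i. \<forall>m\<in>F j. act (b + b') m = act b m + act b' m"
  and act_addR': "\<forall>i j. \<forall>b\<in>Bc A i. \<forall>m\<in>F j. \<forall>m'\<in>F j. act b (m + m') = act b m + act b m'"
  and act_scale': "\<forall>i j c. \<forall>b\<in>Bc A i. \<forall>m\<in>F j. act (bscale sA c b) m = sF c (act b m) \<and> act b (sF c m) = sF c (act b m)"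
  and act_assoc': "\<forall>i j k. \<forall>b\<in>Bc A i. \<forall>b'\<in>Bc A j. \<forall>m\<in>F k. act (bmul mul i b b') m = act b (act b' m)"
  and dF_lin': "\<forall>i. lin_on sF (F i) sF (F (i - 1)) dF"
  and dF_dF': "\<forall>i. \<forall>m\<in>F i. dF (dF m) = 0"
  and dF_leib': "\<forall>i j. \<forall>b\<in>Bc A i. \<forall>m\<in>F j. dF (act b m) = act (bdiff sA dA t b) m + alt i (act b (dF m))"
  and sb1: "\<forall>g\<in>G. \<exists>k. g \<in> F k"
  and sb2: "\<forall>n. \<forall>x\<in>F n. \<exists>c. finite {g\<in>G. c g \<noteq> 0} \<and> (\<forall>k. \<forall>g\<in>G \<inter> F k. c g \<in> Bc A (n - k))
            \<and> x = (\<Sum>g\<in>{g\<in>G. c g \<noteq> 0}. act (c g) g)"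
  and sb3: "\<forall>n c. finite {g\<in>G. c g \<noteq> 0} \<and> (\<forall>k. \<forall>g\<in>G \<inter> F k. c g \<in> Bc A (n - k))
            \<and> (\<Sum>g\<in>{g\<in>G. c g \<noteq> 0}. act (c g) g) = 0 \<longrightarrow> (\<forall>g\<in>G. c g = 0)"
begin

interpretation mA: module sA by (rule modA)
interpretation mF: module sF by (rule modF)
lemma A0[simp]: "0 \<in> A i" using A_sub mA.subspace_0 by blast
lemma F0[simp]: "0 \<in> F i" using F_sub mF.subspace_0 by blast
lemma A_add: "x \<in> A i \<Longrightarrow> y \<in> A i \<Longrightarrow> x + y \<in> A i" using A_sub mA.subspace_add by blast
lemma A_neg: "x \<in> A i \<Longrightarrow> - x \<in> A i" using A_sub mA.subspace_neg by blast
lemma A_diff: "x \<in> A i \<Longrightarrow> y \<in> A i \<Longrightarrow> x - y \<in> A i" using A_sub mA.subspace_diff by blast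
lemma A_scale: "x \<in> A i \<Longrightarrow> sA c x \<in> A i" using A_sub mA.subspace_scale by blast
lemma A_alt: "x \<in> A i \<Longrightarrow> alt k x \<in> A i" by (simp add: alt_def A_neg)
lemma F_add: "x \<in> F i \<Longrightarrow> y \<in> F i \<Longrightarrow> x + y \<in> F i" using F_sub mF.subspace_add by blast
lemma F_neg: "x \<in> F i \<Longrightarrow> - x \<in> F i" using F_sub mF.subspace_neg by blast
lemma F_scale: "x \<in> F i \<Longrightarrow> sF c x \<in> F i" using F_sub mF.subspace_scale by blast
lemma F_alt: "x \<in> F i \<Longrightarrow> alt k x \<in> F i" by (simp add: alt_def F_neg)
lemma F_sum: "(\<And>x. x \<in> S \<Longrightarrow> f x \<in> F i) \<Longrightarrow> sum f S \<in> F i" using F_sub mF.subspace_sum by blast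

lemma A_neg_deg: "i < 0 \<Longrightarrow> A i = {0}"
  by (rule A_neg_deg'[rule_format])
lemma mul_A: "x \<in> A i \<Longrightarrow> y \<in> A j \<Longrightarrow> mul x y \<in> A (i + j)"
  by (rule mul_A'[rule_format])
lemma mul_addL: "x \<in> A i \<Longrightarrow> x' \<in> A i \<Longrightarrow> y \<in> A j \<Longrightarrow> mul (x + x') y = mul x y + mul x' y"
  by (rule mul_addL'[rule_format])
lemma mul_addR: "x \<in> A i \<Longrightarrow> y \<in> A j \<Longrightarrow> y' \<in> A j \<Longrightarrow> mul x (y + y') = mul x y + mul x y'"
  by (rule mul_addR'[rule_format])
lemma mul_scaleL: "x \<in> A i \<Longrightarrow> y \<in> A j \<Longrightarrow> mul (sA c x) y = sA c (mul x y)"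
  by (rule mul_scale'[rule_format, THEN conjunct1])
lemma mul_assoc: "x \<in> A i \<Longrightarrow> y \<in> A j \<Longrightarrow> z \<in> A k \<Longrightarrow> mul (mul x y) z = mul x (mul y z)"
  by (rule mul_assoc'[rule_format])
lemma mul_oneL: "x \<in> A i \<Longrightarrow> mul one x = x"
  by (rule mul_one'[rule_format, THEN conjunct1])
lemma mul_0R[simp]: "x \<in> A i \<Longrightarrow> mul x 0 = 0"
  using mul_addR[of x i 0 0 0] by simp
lemma mul_0L[simp]: "y \<in> A j \<Longrightarrow> mul 0 y = 0"
  using mul_addL[of 0 0 0 y j] by simp
lemma mul_negR: "x \<in> A i \<Longrightarrow> y \<in> A j \<Longrightarrow> mul x (- y) = - mul x y"
proof -
  assume a: "x \<in> A i" "y \<in> A j"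
  have "mul x y + mul x (- y) = mul x (y + - y)" using mul_addR[OF a(1) a(2) A_neg[OF a(2)]] by simp
  also have "\<dots> = 0" using a by simp
  finally show ?thesis by (metis add.inverse_unique)
qed
lemma mul_altR: "x \<in> A i \<Longrightarrow> y \<in> A j \<Longrightarrow> mul x (alt k y) = alt k (mul x y)"
  by (simp add: alt_def mul_negR)
lemma dA_lin: "lin_on sA (A i) sA (A (i - 1)) dA"
  by (rule dA_lin'[rule_format])
lemma dA_A: "x \<in> A i \<Longrightarrow> dA x \<in> A (i - 1)" using dA_lin unfolding lin_on_def by blast
lemma dA_0[simp]: "dA 0 = 0"
proof -
  have "dA (0+0) = dA 0 + dA 0" using dA_lin[of 0] A0 unfolding lin_on_def by blast
  then show ?thesis by simp
qed
lemma dA_one[simp]: "dA one = 0" using dA_A[OF one_A] A_neg_deg[of "0 - 1"] by simp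
lemma dA_leib: "x \<in> A i \<Longrightarrow> y \<in> A j \<Longrightarrow> dA (mul x y) = mul (dA x) y + alt i (mul x (dA y))"
  by (rule dA_leib'[rule_format])


lemma pair_eq_0: "((a,b) = 0) \<longleftrightarrow> a = 0 \<and> b = 0" by (simp add: zero_prod_def)
lemma Bc_iff: "b \<in> Bc A i \<longleftrightarrow> fst b \<in> A (i - 1) \<and> snd b \<in> A i"
  by (cases b) (simp add: Bc_def)
lemma Bc0[simp]: "0 \<in> Bc A i" by (simp add: Bc_iff)
lemma G_deg: "g \<in> G \<Longrightarrow> \<exists>k. g \<in> F k" using sb1 by auto

lemma act_addL: "b \<in> Bc A i \<Longrightarrow> b' \<in> Bc A i \<Longrightarrow> m \<in> F j \<Longrightarrow> act (b + b') m = act b m + act b' m"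
  by (rule act_addL'[rule_format])
lemma act_addR: "b \<in> Bc A i \<Longrightarrow> m \<in> F j \<Longrightarrow> m' \<in> F j \<Longrightarrow> act b (m + m') = act b m + act b m'"
  by (rule act_addR'[rule_format])
lemma act_in: "b \<in> Bc A i \<Longrightarrow> m \<in> F j \<Longrightarrow> act b m \<in> F (i + j)"
  by (rule act_F[rule_format])
lemma act_scaleL: "b \<in> Bc A i \<Longrightarrow> m \<in> F j \<Longrightarrow> act (bscale sA c b) m = sF c (act b m)"
  by (rule act_scale'[rule_format, THEN conjunct1])
lemma act_assoc: "b \<in> Bc A i \<Longrightarrow> b' \<in> Bc A j \<Longrightarrow> m \<in> F k \<Longrightarrow> act (bmul mul i b b') m = act b (act b' m)"
  by (rule act_assoc'[rule_format])
lemma act_0L: "m \<in> F j \<Longrightarrow> act 0 m = 0"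
proof -
  assume m: "m \<in> F j"
  have "act (0 + 0) m = act 0 m + act 0 m" using act_addL[OF Bc0[of 0] Bc0[of 0] m] by simp
  then show ?thesis by simp
qed
lemma act_0R: "b \<in> Bc A i \<Longrightarrow> act b 0 = 0"
proof -
  assume b: "b \<in> Bc A i"
  have "act b (0 + 0) = act b 0 + act b 0" using act_addR[OF b F0 F0] by simp
  then show ?thesis by simp
qed
lemma act_sum: assumes b: "b \<in> Bc A i" shows "finite S \<Longrightarrow> (\<And>g. g \<in> S \<Longrightarrow> x g \<in> F j) \<Longrightarrow>
   act b (\<Sum>g\<in>S. x g) = (\<Sum>g\<in>S. act b (x g))"
proof (induction S rule: finite_induct)
  case empty then show ?case by (simp add: act_0R[OF b])
next
  case (insert a S)
  have "act b (\<Sum>g\<in>insert a S. x g) = act b (x a + (\<Sum>g\<in>S. x g))" using insert by simp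
  also have "\<dots> = act b (x a) + act b (\<Sum>g\<in>S. x g)"
    by (rule act_addR[OF b]) (auto intro: insert F_sum)
  finally show ?case using insert by simp
qed
lemma dF_lin: "lin_on sF (F i) sF (F (i - 1)) dF"
  by (rule dF_lin'[rule_format])
lemma dF_F: "x \<in> F i \<Longrightarrow> dF x \<in> F (i - 1)" using dF_lin unfolding lin_on_def by blast
lemma dF_add: "x \<in> F i \<Longrightarrow> y \<in> F i \<Longrightarrow> dF (x + y) = dF x + dF y" using dF_lin unfolding lin_on_def by blast
lemma dF_scale: "x \<in> F i \<Longrightarrow> dF (sF c x) = sF c (dF x)" using dF_lin unfolding lin_on_def by blast
lemma dF_0[simp]: "dF 0 = 0"
proof -
  have "dF (0+0) = dF 0 + dF 0" using dF_add[OF F0 F0] by simp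
  then show ?thesis by simp
qed
lemma dF_dF: "x \<in> F i \<Longrightarrow> dF (dF x) = 0"
  by (rule dF_dF'[rule_format])
lemma dF_leib: "b \<in> Bc A i \<Longrightarrow> m \<in> F j \<Longrightarrow> dF (act b m) = act (bdiff sA dA t b) m + alt i (act b (dF m))"
  by (rule dF_leib'[rule_format])

abbreviation M where "M \<equiv> Mset A F G"
abbreviation N where "N \<equiv> Nset A F G"

lemma M_iff: "m \<in> M i \<longleftrightarrow> finite {g. m g \<noteq> 0} \<and> (\<forall>g. m g \<noteq> 0 \<longrightarrow> g \<in> G) \<and> (\<forall>k. \<forall>g\<in>G \<inter> F k. m g \<in> A (i - k))"
  by (simp add: Mset_def)
lemma N_iff: "p \<in> N i \<longleftrightarrow> fst p \<in> M (i - 1) \<and> snd p \<in> M i"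
  by (cases p) (simp add: Nset_def)
lemma M_out: "m \<in> M i \<Longrightarrow> g \<notin> G \<Longrightarrow> m g = 0" by (auto simp: M_iff)
lemma M_val: "m \<in> M i \<Longrightarrow> \<exists>d. m g \<in> A d"
proof (cases "g \<in> G")
  case True
  assume m: "m \<in> M i"
  obtain k where "g \<in> F k" using G_deg True by blast
  then show ?thesis using m True by (auto simp: M_iff)
next
  case False
  assume m: "m \<in> M i"
  then show ?thesis using M_out[OF m False] A0 by metis
qed
lemma M_deg: "m \<in> M i \<Longrightarrow> g \<in> G \<Longrightarrow> g \<in> F k \<Longrightarrow> m g \<in> A (i - k)" by (auto simp: M_iff)
lemma M_zero[simp]: "0 \<in> M i" by (simp add: M_iff)
lemma M_add: "m \<in> M i \<Longrightarrow> m' \<in> M i \<Longrightarrow> m + m' \<in> M i"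
proof -
  assume a: "m \<in> M i" "m' \<in> M i"
  have "{g. (m + m') g \<noteq> 0} \<subseteq> {g. m g \<noteq> 0} \<union> {g. m' g \<noteq> 0}" by auto
  then have "finite {g. (m + m') g \<noteq> 0}" using a by (auto simp: M_iff intro: finite_subset)
  moreover have "\<forall>g. (m + m') g \<noteq> 0 \<longrightarrow> g \<in> G"
  proof (intro allI impI)
    fix g assume "(m + m') g \<noteq> 0"
    then have "m g \<noteq> 0 \<or> m' g \<noteq> 0" by auto
    then show "g \<in> G" using a unfolding M_iff by blast
  qed
  moreover have "\<forall>k. \<forall>g\<in>G \<inter> F k. (m + m') g \<in> A (i - k)" using a by (auto simp: M_iff intro: A_add)
  ultimately show ?thesis by (simp add: M_iff)
qed
lemma M_neg: "m \<in> M i \<Longrightarrow> - m \<in> M i"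
proof -
  assume a: "m \<in> M i"
  have e: "\<And>g. (- m) g = - (m g)" by simp
  have "{g. (- m) g \<noteq> 0} = {g. m g \<noteq> 0}" unfolding e by simp
  then show ?thesis using a unfolding M_iff e by (auto intro: A_neg)
qed
lemma M_diff: "m \<in> M i \<Longrightarrow> m' \<in> M i \<Longrightarrow> m - m' \<in> M i"
proof -
  assume a: "m \<in> M i" "m' \<in> M i"
  have "m - m' = m + (- m')" by (rule diff_conv_add_uminus)
  then show ?thesis using M_add[OF a(1) M_neg[OF a(2)]] by simp
qed
lemma M_alt: "m \<in> M i \<Longrightarrow> alt k m \<in> M i"
  by (simp add: alt_def M_neg)
lemma M_scale: "m \<in> M i \<Longrightarrow> mscale sA c m \<in> M i"
proof -
  assume a: "m \<in> M i"
  have "{g. mscale sA c m g \<noteq> 0} \<subseteq> {g. m g \<noteq> 0}" by (auto simp: mscale_def)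
  then have "finite {g. mscale sA c m g \<noteq> 0}" using a unfolding M_iff by (blast intro: finite_subset)
  moreover have "\<forall>g. mscale sA c m g \<noteq> 0 \<longrightarrow> g \<in> G" using a unfolding M_iff mscale_def by force
  moreover have "\<forall>k. \<forall>g\<in>G \<inter> F k. mscale sA c m g \<in> A (i - k)" using a unfolding M_iff mscale_def by (blast intro: A_scale)
  ultimately show ?thesis by (simp add: M_iff)
qed
lemma M_amul: "a \<in> A i \<Longrightarrow> m \<in> M j \<Longrightarrow> amul mul a m \<in> M (i + j)"
proof -
  assume a: "a \<in> A i" and m: "m \<in> M j"
  have "{g. amul mul a m g \<noteq> 0} \<subseteq> {g. m g \<noteq> 0}" using a by (auto simp: amul_def)
  then have "finite {g. amul mul a m g \<noteq> 0}" using m by (auto simp: M_iff intro: finite_subset)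
  moreover have "\<forall>g. amul mul a m g \<noteq> 0 \<longrightarrow> g \<in> G"
  proof (intro allI impI)
    fix g assume "amul mul a m g \<noteq> 0"
    then have "m g \<noteq> 0" using a by (auto simp: amul_def)
    then show "g \<in> G" using m unfolding M_iff by blast
  qed
  moreover have "\<forall>k. \<forall>g\<in>G \<inter> F k. amul mul a m g \<in> A (i + j - k)"
  proof (intro allI ballI)
    fix k g assume "g \<in> G \<inter> F k"
    then have "m g \<in> A (j - k)" using m by (auto simp: M_iff)
    then have "mul a (m g) \<in> A (i + (j - k))" using mul_A a by blast
    then show "amul mul a m g \<in> A (i + j - k)" by (simp add: amul_def add_diff_eq)
  qed
  ultimately show ?thesis by (simp add: M_iff)
qed
lemma amul_0R[simp]: "a \<in> A i \<Longrightarrow> amul mul a 0 = 0" by (simp add: amul_def fun_eq_iff)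
lemma amul_0L[simp]: "m \<in> M i \<Longrightarrow> amul mul 0 m = 0"
proof -
  assume m: "m \<in> M i"
  { fix g obtain d where "m g \<in> A d" using M_val[OF m] by blast
    then have "mul 0 (m g) = 0" by simp }
  then show ?thesis by (simp add: amul_def fun_eq_iff)
qed
lemma amul_one: "m \<in> M i \<Longrightarrow> amul mul one m = m"
proof -
  assume m: "m \<in> M i"
  { fix g obtain d where "m g \<in> A d" using M_val[OF m] by blast
    then have "mul one (m g) = m g" by (rule mul_oneL) }
  then show ?thesis by (simp add: amul_def fun_eq_iff)
qed


lemma N_zero[simp]: "0 \<in> N i" by (simp add: N_iff)
lemma N_add: "p \<in> N i \<Longrightarrow> q \<in> N i \<Longrightarrow> p + q \<in> N i"
  unfolding N_iff by (simp add: M_add)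
lemma N_neg: "p \<in> N i \<Longrightarrow> - p \<in> N i"
  unfolding N_iff by (simp add: M_neg)
lemma N_diff: "p \<in> N i \<Longrightarrow> q \<in> N i \<Longrightarrow> p - q \<in> N i"
  unfolding N_iff by (simp add: M_diff)
lemma N_scale: "p \<in> N i \<Longrightarrow> nscale sA c p \<in> N i"
  unfolding N_iff by (simp add: M_scale nscale_def)
lemma N_pair: "u \<in> M (i - 1) \<Longrightarrow> v \<in> M i \<Longrightarrow> (u, v) \<in> N i" by (simp add: N_iff)
lemma nact_N: "b \<in> Bc A i \<Longrightarrow> p \<in> N j \<Longrightarrow> nact mul i b p \<in> N (i + j)"
proof -
  assume b: "b \<in> Bc A i" and p: "p \<in> N j"
  have b1: "fst b \<in> A (i - 1)" and b2: "snd b \<in> A i" using b by (auto simp: Bc_iff)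
  have p1: "fst p \<in> M (j - 1)" and p2: "snd p \<in> M j" using p by (auto simp: N_iff)
  have "amul mul (fst b) (snd p) \<in> M (i - 1 + j)" by (rule M_amul[OF b1 p2])
  moreover have "amul mul (snd b) (fst p) \<in> M (i + (j - 1))" by (rule M_amul[OF b2 p1])
  ultimately have "amul mul (fst b) (snd p) + alt i (amul mul (snd b) (fst p)) \<in> M (i + j - 1)"
    by (metis M_add M_alt add.commute add_diff_eq diff_add_eq)
  moreover have "amul mul (snd b) (snd p) \<in> M (i + j)" by (rule M_amul[OF b2 p2])
  ultimately show ?thesis by (simp add: N_iff nact_def)
qed

definition pv :: "('f \<Rightarrow> 'a) \<times> ('f \<Rightarrow> 'a) \<Rightarrow> 'f \<Rightarrow> 'a \<times> 'a" where
  "pv p g = (fst p g, snd p g)"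
definition supp where "supp p = {g\<in>G. pv p g \<noteq> 0}"
definition psi where "psi p = (\<Sum>g\<in>supp p. act (pv p g) g)"

lemma pv_Bc: "p \<in> N n \<Longrightarrow> g \<in> G \<Longrightarrow> g \<in> F k \<Longrightarrow> pv p g \<in> Bc A (n - k)"
proof -
  assume p: "p \<in> N n" and g: "g \<in> G" "g \<in> F k"
  have "fst p g \<in> A (n - 1 - k)" using p g by (auto simp: N_iff intro: M_deg)
  moreover have "n - 1 - k = n - k - 1" by simp
  moreover have "snd p g \<in> A (n - k)" using p g by (auto simp: N_iff intro: M_deg)
  ultimately show ?thesis by (simp add: Bc_iff pv_def)
qed
lemma supp_fin: "p \<in> N n \<Longrightarrow> finite (supp p)"
proof -
  assume p: "p \<in> N n"
  have "supp p \<subseteq> {g. fst p g \<noteq> 0} \<union> {g. snd p g \<noteq> 0}" by (auto simp: supp_def pv_def pair_eq_0)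
  moreover have "finite ({g. fst p g \<noteq> 0} \<union> {g. snd p g \<noteq> 0})" using p by (simp add: N_iff M_iff)
  ultimately show ?thesis by (rule finite_subset)
qed
lemma supp_G: "supp p \<subseteq> G" by (auto simp: supp_def)
lemma term_F: "p \<in> N n \<Longrightarrow> g \<in> G \<Longrightarrow> act (pv p g) g \<in> F n"
proof -
  assume p: "p \<in> N n" and g: "g \<in> G"
  obtain k where k: "g \<in> F k" using G_deg[OF g] by blast
  have "act (pv p g) g \<in> F (n - k + k)" by (rule act_in[OF pv_Bc[OF p g k] k])
  then show ?thesis by simp
qed
lemma psi_S: "p \<in> N n \<Longrightarrow> finite S \<Longrightarrow> supp p \<subseteq> S \<Longrightarrow> S \<subseteq> G \<Longrightarrow> psi p = (\<Sum>g\<in>S. act (pv p g) g)"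
  unfolding psi_def
proof (rule sum.mono_neutral_left)
  assume "finite S" "supp p \<subseteq> S" "S \<subseteq> G"
  then show "finite S" "supp p \<subseteq> S" by auto
  show "\<forall>g\<in>S - supp p. act (pv p g) g = 0"
  proof
    fix g assume g: "g \<in> S - supp p"
    then have gG: "g \<in> G" using \<open>S \<subseteq> G\<close> by auto
    then have "pv p g = 0" using g by (auto simp: supp_def)
    moreover obtain k where "g \<in> F k" using G_deg[OF gG] by blast
    ultimately show "act (pv p g) g = 0" using act_0L by simp
  qed
qed
lemma psi_F: "p \<in> N n \<Longrightarrow> psi p \<in> F n"
  unfolding psi_def by (rule F_sum) (auto intro: term_F simp: supp_def)

lemma pv_add: "pv (p + q) g = pv p g + pv q g" by (simp add: pv_def)
lemma psi_add: "p \<in> N n \<Longrightarrow> q \<in> N n \<Longrightarrow> psi (p + q) = psi p + psi q"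
proof -
  assume p: "p \<in> N n" and q: "q \<in> N n"
  have pq: "p + q \<in> N n" by (rule N_add[OF p q])
  define S where "S = supp p \<union> supp q \<union> supp (p + q)"
  have S: "finite S" "S \<subseteq> G" unfolding S_def using supp_fin[OF p] supp_fin[OF q] supp_fin[OF pq] supp_G by auto
  have "psi (p + q) = (\<Sum>g\<in>S. act (pv (p + q) g) g)" by (rule psi_S[OF pq S(1) _ S(2)]) (auto simp: S_def)
  also have "\<dots> = (\<Sum>g\<in>S. act (pv p g) g + act (pv q g) g)"
  proof (rule sum.cong[OF refl])
    fix g assume "g \<in> S"
    then have gG: "g \<in> G" using S by auto
    obtain k where k: "g \<in> F k" using G_deg[OF gG] by blast
    show "act (pv (p + q) g) g = act (pv p g) g + act (pv q g) g"
      unfolding pv_add by (rule act_addL[OF pv_Bc[OF p gG k] pv_Bc[OF q gG k] k])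
  qed
  also have "\<dots> = (\<Sum>g\<in>S. act (pv p g) g) + (\<Sum>g\<in>S. act (pv q g) g)" by (rule sum.distrib)
  also have "\<dots> = psi p + psi q"
  proof -
    have "psi p = (\<Sum>g\<in>S. act (pv p g) g)" by (rule psi_S[OF p S(1) _ S(2)]) (auto simp: S_def)
    moreover have "psi q = (\<Sum>g\<in>S. act (pv q g) g)" by (rule psi_S[OF q S(1) _ S(2)]) (auto simp: S_def)
    ultimately show ?thesis by simp
  qed
  finally show ?thesis .
qed
lemma pv_scale: "pv (nscale sA c p) g = bscale sA c (pv p g)"
  by (simp add: pv_def nscale_def mscale_def bscale_def)
lemma psi_scale: "p \<in> N n \<Longrightarrow> psi (nscale sA c p) = sF c (psi p)"
proof -
  assume p: "p \<in> N n"
  have pc: "nscale sA c p \<in> N n" by (rule N_scale[OF p])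
  have sub: "supp (nscale sA c p) \<subseteq> supp p"
    by (auto simp: supp_def nscale_def mscale_def pv_def pair_eq_0)
  have "psi (nscale sA c p) = (\<Sum>g\<in>supp p. act (pv (nscale sA c p) g) g)"
    by (rule psi_S[OF pc supp_fin[OF p] sub supp_G])
  also have "\<dots> = (\<Sum>g\<in>supp p. sF c (act (pv p g) g))"
  proof (rule sum.cong[OF refl])
    fix g assume "g \<in> supp p"
    then have gG: "g \<in> G" by (simp add: supp_def)
    obtain k where k: "g \<in> F k" using G_deg[OF gG] by blast
    show "act (pv (nscale sA c p) g) g = sF c (act (pv p g) g)"
      unfolding pv_scale by (rule act_scaleL[OF pv_Bc[OF p gG k] k])
  qed
  also have "\<dots> = sF c (psi p)" by (simp add: psi_def mF.scale_sum_right)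
  finally show ?thesis .
qed
lemma pv_nact: "pv (nact mul i b p) g = bmul mul i b (pv p g)"
  by (simp add: pv_def nact_def bmul_def amul_def alt_fun)
lemma psi_act: "b \<in> Bc A i \<Longrightarrow> p \<in> N j \<Longrightarrow> act b (psi p) = psi (nact mul i b p)"
proof -
  assume b: "b \<in> Bc A i" and p: "p \<in> N j"
  have b1: "fst b \<in> A (i - 1)" and b2: "snd b \<in> A i" using b by (auto simp: Bc_iff)
  have pn: "nact mul i b p \<in> N (i + j)" by (rule nact_N[OF b p])
  have sub: "supp (nact mul i b p) \<subseteq> supp p"
  proof
    fix g assume g: "g \<in> supp (nact mul i b p)"
    show "g \<in> supp p"
    proof (rule ccontr)
      assume "g \<notin> supp p"
      then have "pv p g = 0" using g by (auto simp: supp_def)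
      then have "fst p g = 0" "snd p g = 0" by (auto simp: pv_def pair_eq_0)
      then have "pv (nact mul i b p) g = 0" using b1 b2
        by (simp add: nact_def amul_def alt_fun pv_def pair_eq_0)
      then show False using g by (auto simp: supp_def)
    qed
  qed
  have "act b (psi p) = (\<Sum>g\<in>supp p. act b (act (pv p g) g))"
    unfolding psi_def by (rule act_sum[OF b supp_fin[OF p]]) (auto intro: term_F[OF p] simp: supp_def)
  also have "\<dots> = (\<Sum>g\<in>supp p. act (pv (nact mul i b p) g) g)"
  proof (rule sum.cong[OF refl])
    fix g assume "g \<in> supp p"
    then have gG: "g \<in> G" by (simp add: supp_def)
    obtain k where k: "g \<in> F k" using G_deg[OF gG] by blast
    show "act b (act (pv p g) g) = act (pv (nact mul i b p) g) g"
      unfolding pv_nact by (rule act_assoc[OF b pv_Bc[OF p gG k] k, symmetric])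
  qed
  also have "\<dots> = psi (nact mul i b p)"
    by (rule psi_S[OF pn supp_fin[OF p] sub supp_G, symmetric])
  finally show ?thesis .
qed


lemma psi_zero: "p \<in> N n \<Longrightarrow> psi p = 0 \<Longrightarrow> p = 0"
proof -
  assume p: "p \<in> N n" and z: "psi p = 0"
  have "finite {g\<in>G. pv p g \<noteq> 0} \<and> (\<forall>k. \<forall>g\<in>G \<inter> F k. pv p g \<in> Bc A (n - k))
            \<and> (\<Sum>g\<in>{g\<in>G. pv p g \<noteq> 0}. act (pv p g) g) = 0"
    using supp_fin[OF p] pv_Bc[OF p] z unfolding psi_def supp_def by blast
  then have all: "\<forall>g\<in>G. pv p g = 0" using sb3 by blast
  have "\<And>g. fst p g = 0 \<and> snd p g = 0"
  proof -
    fix g show "fst p g = 0 \<and> snd p g = 0"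
    proof (cases "g \<in> G")
      case True then show ?thesis using all by (auto simp: pv_def pair_eq_0)
    next
      case False then show ?thesis using p M_out by (auto simp: N_iff)
    qed
  qed
  then show "p = 0" by (simp add: prod_eq_iff fun_eq_iff)
qed
lemma psi_inj: "p \<in> N n \<Longrightarrow> q \<in> N n \<Longrightarrow> psi p = psi q \<Longrightarrow> p = q"
proof -
  assume p: "p \<in> N n" and q: "q \<in> N n" and e: "psi p = psi q"
  have r: "p - q \<in> N n" by (rule N_diff[OF p q])
  have "psi p = psi ((p - q) + q)" by simp
  also have "\<dots> = psi (p - q) + psi q" by (rule psi_add[OF r q])
  finally have "psi (p - q) = 0" using e by simp
  then have "p - q = 0" by (rule psi_zero[OF r])
  then show "p = q" by simp
qed
lemma psi_surj: "x \<in> F n \<Longrightarrow> \<exists>p\<in>N n. psi p = x"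
proof -
  assume x: "x \<in> F n"
  obtain c where c1: "finite {g\<in>G. c g \<noteq> 0}" and c2: "\<forall>k. \<forall>g\<in>G \<inter> F k. c g \<in> Bc A (n - k)"
    and c3: "x = (\<Sum>g\<in>{g\<in>G. c g \<noteq> 0}. act (c g) g)" using sb2 x by blast
  define p where "p = ((\<lambda>g. if g \<in> G then fst (c g) else 0), (\<lambda>g. if g \<in> G then snd (c g) else 0))"
  have pv: "pv p g = (if g \<in> G then c g else 0)" for g by (simp add: p_def pv_def zero_prod_def)
  have u: "fst p \<in> M (n - 1)"
  proof -
    have "{g. fst p g \<noteq> 0} \<subseteq> {g\<in>G. c g \<noteq> 0}" by (auto simp: p_def split: if_splits)
    then have "finite {g. fst p g \<noteq> 0}" using c1 by (rule finite_subset)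
    moreover have "\<forall>g. fst p g \<noteq> 0 \<longrightarrow> g \<in> G" by (simp add: p_def)
    moreover have "\<forall>k. \<forall>g\<in>G \<inter> F k. fst p g \<in> A (n - 1 - k)"
    proof (intro allI ballI)
      fix k g assume g: "g \<in> G \<inter> F k"
      then have "fst (c g) \<in> A (n - k - 1)" using c2 by (auto simp: Bc_iff)
      moreover have "n - k - 1 = n - 1 - k" by simp
      ultimately show "fst p g \<in> A (n - 1 - k)" using g by (simp add: p_def)
    qed
    ultimately show ?thesis by (simp add: M_iff)
  qed
  have v: "snd p \<in> M n"
  proof -
    have "{g. snd p g \<noteq> 0} \<subseteq> {g\<in>G. c g \<noteq> 0}" by (auto simp: p_def split: if_splits)
    then have "finite {g. snd p g \<noteq> 0}" using c1 by (rule finite_subset)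
    moreover have "\<forall>g. snd p g \<noteq> 0 \<longrightarrow> g \<in> G" by (simp add: p_def)
    moreover have "\<forall>k. \<forall>g\<in>G \<inter> F k. snd p g \<in> A (n - k)"
      using c2 by (auto simp: p_def Bc_iff)
    ultimately show ?thesis by (simp add: M_iff)
  qed
  have pN: "p \<in> N n" using u v by (simp add: N_iff)
  have "supp p = {g\<in>G. c g \<noteq> 0}" by (auto simp: supp_def pv)
  then have "psi p = x" unfolding psi_def c3 by (auto intro!: sum.cong simp: pv)
  then show ?thesis using pN by blast
qed

lemma psi_bij: "bij_betw psi (N n) (F n)"
  unfolding bij_betw_def
proof
  show "inj_on psi (N n)" by (auto intro: inj_onI psi_inj)
  show "psi ` N n = F n" using psi_F psi_surj by blast
qed

definition phi where "phi n = inv_into (N n) psi"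

lemma phi_bij: "bij_betw (phi n) (F n) (N n)"
  unfolding phi_def by (rule bij_betw_inv_into[OF psi_bij])
lemma phi_N: "x \<in> F n \<Longrightarrow> phi n x \<in> N n"
  using phi_bij bij_betwE by blast
lemma psi_phi: "x \<in> F n \<Longrightarrow> psi (phi n x) = x"
  unfolding phi_def by (rule f_inv_into_f) (use psi_bij[of n] in \<open>auto simp: bij_betw_def\<close>)
lemma phi_psi: "p \<in> N n \<Longrightarrow> phi n (psi p) = p"
  unfolding phi_def by (rule inv_into_f_f) (use psi_bij[of n] in \<open>auto simp: bij_betw_def\<close>)
lemma phi_eqI: "p \<in> N n \<Longrightarrow> psi p = x \<Longrightarrow> phi n x = p"
  using phi_psi by blast
lemma phi_add: "x \<in> F n \<Longrightarrow> y \<in> F n \<Longrightarrow> phi n (x + y) = phi n x + phi n y"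
  by (rule phi_eqI) (simp_all add: N_add phi_N psi_add[OF phi_N phi_N] psi_phi)
lemma phi_0[simp]: "phi n 0 = 0"
  by (rule phi_eqI[OF N_zero]) (simp add: psi_def supp_def pv_def zero_prod_def)
lemma phi_neg: "x \<in> F n \<Longrightarrow> phi n (- x) = - phi n x"
proof -
  assume x: "x \<in> F n"
  have "phi n (x + - x) = phi n x + phi n (- x)" by (rule phi_add[OF x F_neg[OF x]])
  then have "phi n x + phi n (- x) = 0" by simp
  then show ?thesis by (metis add.inverse_unique)
qed
lemma phi_alt: "x \<in> F n \<Longrightarrow> phi n (alt k x) = alt k (phi n x)"
  by (simp add: alt_def phi_neg)
lemma phi_scale: "x \<in> F n \<Longrightarrow> phi n (sF c x) = nscale sA c (phi n x)"
  by (rule phi_eqI) (simp_all add: N_scale phi_N psi_scale[OF phi_N] psi_phi)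
lemma phi_act: "b \<in> Bc A i \<Longrightarrow> x \<in> F j \<Longrightarrow> phi (i + j) (act b x) = nact mul i b (phi j x)"
  by (rule phi_eqI) (simp_all add: nact_N phi_N psi_act[OF _ phi_N, symmetric] psi_phi)


definition D where "D i m = phi (i - 1) (dF (psi (0, m)))"
definition alph where "alph i m = snd (D i m)"
definition delt where "delt i m = fst (D i m)"

lemma D_eq: "D i m = (delt i m, alph i m)" by (simp add: alph_def delt_def)
lemma psi0_F: "m \<in> M i \<Longrightarrow> psi (0, m) \<in> F i" by (rule psi_F) (simp add: N_iff)
lemma D_N: "m \<in> M i \<Longrightarrow> D i m \<in> N (i - 1)"
  unfolding D_def by (rule phi_N[OF dF_F[OF psi0_F]])
lemma alph_M: "m \<in> M i \<Longrightarrow> alph i m \<in> M (i - 1)"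
  using D_N by (simp add: alph_def N_iff)
lemma delt_M: "m \<in> M i \<Longrightarrow> delt i m \<in> M (i - 2)"
  using D_N[of m i] by (simp add: delt_def N_iff diff_diff_eq)
lemma D_add: "m \<in> M i \<Longrightarrow> m' \<in> M i \<Longrightarrow> D i (m + m') = D i m + D i m'"
proof -
  assume a: "m \<in> M i" "m' \<in> M i"
  have "psi (0, m + m') = psi ((0, m) + (0, m'))" by simp
  also have "\<dots> = psi (0, m) + psi (0, m')" by (rule psi_add) (use a in \<open>simp_all add: N_iff\<close>)
  finally have e: "psi (0, m + m') = psi (0, m) + psi (0, m')" .
  show ?thesis unfolding D_def e
    using dF_add[OF psi0_F[OF a(1)] psi0_F[OF a(2)]] phi_add[OF dF_F[OF psi0_F[OF a(1)]] dF_F[OF psi0_F[OF a(2)]]]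
    by simp
qed
lemma D_scale: "m \<in> M i \<Longrightarrow> D i (mscale sA c m) = nscale sA c (D i m)"
proof -
  assume a: "m \<in> M i"
  have z: "mscale sA c 0 = 0" by (simp add: mscale_def fun_eq_iff)
  have "psi (0, mscale sA c m) = psi (nscale sA c (0, m))" by (simp add: nscale_def z)
  also have "\<dots> = sF c (psi (0, m))" by (rule psi_scale) (use a in \<open>simp add: N_iff\<close>)
  finally have e: "psi (0, mscale sA c m) = sF c (psi (0, m))" .
  show ?thesis unfolding D_def e
    using dF_scale[OF psi0_F[OF a]] phi_scale[OF dF_F[OF psi0_F[OF a]]] by simp
qed
lemma alph_lin: "lin_on (mscale sA) (M i) (mscale sA) (M (i - 1)) (alph i)"
  unfolding lin_on_def alph_def using alph_M[unfolded alph_def] by (auto simp: D_add D_scale nscale_def)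
lemma delt_lin: "lin_on (mscale sA) (M i) (mscale sA) (M (i - 2)) (delt i)"
  unfolding lin_on_def delt_def using delt_M[unfolded delt_def] by (auto simp: D_add D_scale nscale_def)
lemma mscale_neg: "mscale sA c (- m) = - mscale sA c m" by (simp add: mscale_def fun_eq_iff)
lemma xi_lin: "lin_on (mscale sA) (M i) (mscale sA) (M (i - 1)) (\<lambda>m. - alph i m)"
  using alph_lin[of i] unfolding lin_on_def by (auto simp: M_neg mscale_neg)
lemma tau_lin: "lin_on (mscale sA) (M i) (mscale sA) (M i) (\<lambda>m. mscale sA t m)"
  unfolding lin_on_def using M_scale[unfolded mscale_def] by (auto simp: mscale_def fun_eq_iff mA.scale_right_distrib mult.commute)
lemma mscale_0[simp]: "mscale sA c 0 = 0" by (simp add: mscale_def fun_eq_iff)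

abbreviation "XI \<equiv> (\<lambda>i m. - alph i m)"
abbreviation "TAU \<equiv> (\<lambda>i m. mscale sA t m)"

lemma amul_scale_one: "m \<in> M i \<Longrightarrow> amul mul (sA c one) m = mscale sA c m"
proof -
  assume m: "m \<in> M i"
  { fix g obtain d where d: "m g \<in> A d" using M_val[OF m] by blast
    have "mul (sA c one) (m g) = sA c (mul one (m g))" by (rule mul_scaleL[OF one_A d])
    also have "\<dots> = sA c (m g)" using mul_oneL[OF d] by simp
    finally have "mul (sA c one) (m g) = sA c (m g)" . }
  then show ?thesis by (simp add: amul_def mscale_def fun_eq_iff)
qed

lemma nd_main: "x \<in> F i \<Longrightarrow> phi (i - 1) (dF x) = ndiff XI TAU delt alph i (phi i x)"
proof -
  assume x: "x \<in> F i"
  obtain u v where uv: "phi i x = (u, v)" by (cases "phi i x")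
  have u: "u \<in> M (i - 1)" and v: "v \<in> M i" using phi_N[OF x] uv by (auto simp: N_iff)
  define e where "e = (one, (0::'a))"
  have e: "e \<in> Bc A 1" by (simp add: e_def Bc_iff one_A)
  define y where "y = psi (0, u)"
  define z where "z = psi (0, v)"
  have y: "y \<in> F (i - 1)" unfolding y_def by (rule psi0_F[OF u])
  have z: "z \<in> F i" unfolding z_def by (rule psi0_F[OF v])
  have u0: "(0, u) \<in> N (i - 1)" using u by (simp add: N_iff)
  have ey: "act e y = psi (u, 0)"
  proof -
    have "act e y = psi (nact mul 1 e (0, u))" unfolding y_def by (rule psi_act[OF e u0])
    moreover have "nact mul 1 e (0, u) = (u, 0)"
      using u by (simp add: nact_def e_def amul_one)
    ultimately show ?thesis by simp
  qed
  have eyF: "act e y \<in> F i" using act_in[OF e y] by simp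
  have "x = psi (u, v)" using psi_phi[OF x] uv by simp
  also have "\<dots> = psi ((u, 0) + (0, v))" by simp
  also have "\<dots> = psi (u, 0) + psi (0, v)" by (rule psi_add) (use u v in \<open>simp_all add: N_iff\<close>)
  finally have xe: "x = act e y + z" unfolding ey z_def .
  have "dF x = dF (act e y) + dF z" unfolding xe by (rule dF_add[OF eyF z])
  also have "dF (act e y) = act (bdiff sA dA t e) y + alt 1 (act e (dF y))" by (rule dF_leib[OF e y])
  also have "bdiff sA dA t e = (0, sA t one)" by (simp add: bdiff_def e_def)
  finally have dx: "dF x = act (0, sA t one) y + - act e (dF y) + dF z" by simp
  have b0: "(0, sA t one) \<in> Bc A 0" by (simp add: Bc_iff A_scale one_A)
  have F1: "act (0, sA t one) y \<in> F (i - 1)" using act_in[OF b0 y] by simp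
  have dy: "dF y \<in> F (i - 1 - 1)" by (rule dF_F[OF y])
  have F2: "act e (dF y) \<in> F (i - 1)" using act_in[OF e dy] by simp
  have F3: "dF z \<in> F (i - 1)" by (rule dF_F[OF z])
  have p1: "phi (i - 1) (act (0, sA t one) y) = (0, mscale sA t u)"
  proof -
    have "phi (0 + (i - 1)) (act (0, sA t one) y) = nact mul 0 (0, sA t one) (phi (i - 1) y)"
      by (rule phi_act[OF b0 y])
    also have "phi (i - 1) y = (0, u)" unfolding y_def by (rule phi_psi[OF u0])
    finally show ?thesis using u by (simp add: nact_def amul_scale_one A_scale one_A)
  qed
  have p2: "phi (i - 1) (act e (dF y)) = (alph (i - 1) u, 0)"
  proof -
    have "phi (1 + (i - 1 - 1)) (act e (dF y)) = nact mul 1 e (phi (i - 1 - 1) (dF y))"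
      by (rule phi_act[OF e dy])
    also have "phi (i - 1 - 1) (dF y) = D (i - 1) u" by (simp add: D_def y_def)
    also have "\<dots> = (delt (i - 1) u, alph (i - 1) u)" by (rule D_eq)
    finally show ?thesis using alph_M[OF u] delt_M[OF u] by (simp add: nact_def e_def amul_one)
  qed
  have p3: "phi (i - 1) (dF z) = (delt i v, alph i v)" using D_eq[of i v] by (simp add: D_def z_def)
  have "phi (i - 1) (dF x) = phi (i - 1) (act (0, sA t one) y) + phi (i - 1) (- act e (dF y)) + phi (i - 1) (dF z)"
    unfolding dx using phi_add[OF F_add[OF F1 F_neg[OF F2]] F3] phi_add[OF F1 F_neg[OF F2]] by simp
  also have "\<dots> = (0, mscale sA t u) + - (alph (i - 1) u, 0) + (delt i v, alph i v)"
    using p1 p2 p3 F2 by (simp add: phi_neg)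
  finally show ?thesis by (simp add: uv ndiff_def)
qed


lemma dd_rel: "m \<in> M i \<Longrightarrow>
   - alph (i - 1 - 1) (delt i m) + delt (i - 1) (alph i m) = 0 \<and>
   mscale sA t (delt i m) + alph (i - 1) (alph i m) = 0"
proof -
  assume m: "m \<in> M i"
  define w where "w = dF (psi (0, m))"
  have w: "w \<in> F (i - 1)" unfolding w_def by (rule dF_F[OF psi0_F[OF m]])
  have "phi (i - 1 - 1) (dF w) = ndiff XI TAU delt alph (i - 1) (phi (i - 1) w)" by (rule nd_main[OF w])
  moreover have "dF w = 0" unfolding w_def by (rule dF_dF[OF psi0_F[OF m]])
  moreover have "phi (i - 1) w = (delt i m, alph i m)" using D_eq[of i m] by (simp add: D_def w_def)
  ultimately have "(0::('f \<Rightarrow> 'a) \<times> ('f \<Rightarrow> 'a)) = ndiff XI TAU delt alph (i - 1) (delt i m, alph i m)" by simp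
  then show ?thesis by (simp add: ndiff_def zero_prod_def)
qed
lemma alph_alph: "m \<in> M i \<Longrightarrow> alph (i - 1) (alph i m) = - mscale sA t (delt i m)"
  using dd_rel by (metis add.commute add.inverse_unique)
lemma delt_alph: "m \<in> M (i + 1) \<Longrightarrow> delt i (alph (i + 1) m) = alph (i - 1) (delt (i + 1) m)"
proof -
  assume m: "m \<in> M (i + 1)"
  have "- alph (i + 1 - 1 - 1) (delt (i + 1) m) + delt (i + 1 - 1) (alph (i + 1) m) = 0"
    using dd_rel[OF m] by blast
  then have "- alph (i - 1) (delt (i + 1) m) + delt i (alph (i + 1) m) = 0" by simp
  then show ?thesis by (metis add.inverse_unique minus_minus)
qed

lemma amul_lemma: "a \<in> A i \<Longrightarrow> m \<in> M j \<Longrightarrow>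
   delt (i + j) (amul mul a m) = amul mul a (delt j m) \<and>
   alph (i + j) (amul mul a m) = amul mul (dA a) m + alt i (amul mul a (alph j m))"
proof -
  assume a: "a \<in> A i" and m: "m \<in> M j"
  define b where "b = ((0::'a), a)"
  have b: "b \<in> Bc A i" using a by (simp add: b_def Bc_iff)
  define y where "y = psi (0, m)"
  have y: "y \<in> F j" unfolding y_def by (rule psi0_F[OF m])
  have m0: "(0, m) \<in> N j" using m by (simp add: N_iff)
  have am: "amul mul a m \<in> M (i + j)" by (rule M_amul[OF a m])
  have by_: "act b y = psi (0, amul mul a m)"
  proof -
    have "act b y = psi (nact mul i b (0, m))" unfolding y_def by (rule psi_act[OF b m0])
    moreover have "nact mul i b (0, m) = (0, amul mul a m)" using a m by (simp add: nact_def b_def)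
    ultimately show ?thesis by simp
  qed
  have "dF (act b y) = act (bdiff sA dA t b) y + alt i (act b (dF y))" by (rule dF_leib[OF b y])
  also have "bdiff sA dA t b = (0, dA a)" by (simp add: bdiff_def b_def)
  finally have dx: "dF (act b y) = act (0, dA a) y + alt i (act b (dF y))" .
  have b1: "(0, dA a) \<in> Bc A (i - 1)" using dA_A[OF a] by (simp add: Bc_iff)
  have F1: "act (0, dA a) y \<in> F (i + j - 1)" using act_in[OF b1 y] by (simp add: algebra_simps)
  have dy: "dF y \<in> F (j - 1)" by (rule dF_F[OF y])
  have F2: "act b (dF y) \<in> F (i + j - 1)" using act_in[OF b dy] by (simp add: algebra_simps)
  have p1: "phi (i + j - 1) (act (0, dA a) y) = (0, amul mul (dA a) m)"
  proof -
    have "phi (i - 1 + j) (act (0, dA a) y) = nact mul (i - 1) (0, dA a) (phi j y)"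
      by (rule phi_act[OF b1 y])
    also have "phi j y = (0, m)" unfolding y_def by (rule phi_psi[OF m0])
    finally show ?thesis using m dA_A[OF a] by (simp add: nact_def algebra_simps)
  qed
  have p2: "phi (i + j - 1) (act b (dF y)) = (alt i (amul mul a (delt j m)), amul mul a (alph j m))"
  proof -
    have "phi (i + (j - 1)) (act b (dF y)) = nact mul i b (phi (j - 1) (dF y))"
      by (rule phi_act[OF b dy])
    also have "phi (j - 1) (dF y) = D j m" by (simp add: D_def y_def)
    also have "\<dots> = (delt j m, alph j m)" by (rule D_eq)
    finally show ?thesis using alph_M[OF m] by (simp add: nact_def b_def algebra_simps)
  qed
  have "D (i + j) (amul mul a m) = phi (i + j - 1) (dF (act b y))" by (simp add: D_def by_)
  also have "\<dots> = phi (i + j - 1) (act (0, dA a) y) + phi (i + j - 1) (alt i (act b (dF y)))"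
    unfolding dx by (rule phi_add[OF F1 F_alt[OF F2]])
  also have "\<dots> = (0, amul mul (dA a) m) + alt i (alt i (amul mul a (delt j m)), amul mul a (alph j m))"
    using p1 p2 phi_alt[OF F2] by simp
  finally show ?thesis by (simp add: D_eq alt_pair)
qed


lemma main:
  assumes gam: "\<And>i s. s < r i \<Longrightarrow> gam i s \<in> A i"
  shows "\<exists>xi tau delta alpha \<phi>.
     (\<forall>i. lin_on (mscale sA) (Mset A F G i) (mscale sA) (Mset A F G (i - 1)) (xi i))
   \<and> (\<forall>i. lin_on (mscale sA) (Mset A F G i) (mscale sA) (Mset A F G i) (tau i))
   \<and> (\<forall>i. lin_on (mscale sA) (Mset A F G i) (mscale sA) (Mset A F G (i - 2)) (delta i))
   \<and> (\<forall>i. lin_on (mscale sA) (Mset A F G i) (mscale sA) (Mset A F G (i - 1)) (alpha i))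
   \<and> (\<forall>i. \<forall>m\<in>Mset A F G i. xi i m = - alpha i m)
   \<and> (\<forall>i. \<forall>m\<in>Mset A F G i. tau i m = mscale sA t m)
   \<and> (\<forall>i. \<forall>m\<in>Mset A F G i. alpha (i - 1) (alpha i m) = - mscale sA t (delta i m))
   \<and> (\<forall>i. \<forall>m\<in>Mset A F G (i + 1). delta i (alpha (i + 1) m) = alpha (i - 1) (delta (i + 1) m))
   \<and> (\<forall>i j. \<forall>s<r i. \<forall>m\<in>Mset A F G j.
        delta (i + j) (amul mul (gam i s) m) = amul mul (gam i s) (delta j m))
   \<and> (\<forall>i j. \<forall>s<r i. \<forall>m\<in>Mset A F G j.
        alpha (i + j) (amul mul (gam i s) m)
          = amul mul (dA (gam i s)) m + alt i (amul mul (gam i s) (alpha j m)))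
   \<and> (\<forall>i. bij_betw (\<phi> i) (F i) (Nset A F G i))
   \<and> (\<forall>i. lin_on sF (F i) (nscale sA) (Nset A F G i) (\<phi> i))
   \<and> (\<forall>i. \<forall>x\<in>F i. \<phi> (i - 1) (dF x) = ndiff xi tau delta alpha i (\<phi> i x))
   \<and> (\<forall>i j. \<forall>b\<in>Bc A i. \<forall>x\<in>F j. \<phi> (i + j) (act b x) = nact mul i b (\<phi> j x))"
proof (intro exI conjI)
  show "\<forall>i. lin_on (mscale sA) (M i) (mscale sA) (M (i - 1)) (XI i)" using xi_lin by blast
  show "\<forall>i. lin_on (mscale sA) (M i) (mscale sA) (M i) (TAU i)" using tau_lin by blast
  show "\<forall>i. lin_on (mscale sA) (M i) (mscale sA) (M (i - 2)) (delt i)" using delt_lin by blast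
  show "\<forall>i. lin_on (mscale sA) (M i) (mscale sA) (M (i - 1)) (alph i)" using alph_lin by blast
  show "\<forall>i. \<forall>m\<in>M i. XI i m = - alph i m" by simp
  show "\<forall>i. \<forall>m\<in>M i. TAU i m = mscale sA t m" by simp
  show "\<forall>i. \<forall>m\<in>M i. alph (i - 1) (alph i m) = - mscale sA t (delt i m)" using alph_alph by blast
  show "\<forall>i. \<forall>m\<in>M (i + 1). delt i (alph (i + 1) m) = alph (i - 1) (delt (i + 1) m)" using delt_alph by blast
  show "\<forall>i j. \<forall>s<r i. \<forall>m\<in>M j. delt (i + j) (amul mul (gam i s) m) = amul mul (gam i s) (delt j m)"
    using amul_lemma gam by blast
  show "\<forall>i j. \<forall>s<r i. \<forall>m\<in>M j. alph (i + j) (amul mul (gam i s) m)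
          = amul mul (dA (gam i s)) m + alt i (amul mul (gam i s) (alph j m))"
    using amul_lemma gam by blast
  show "\<forall>i. bij_betw (phi i) (F i) (N i)" using phi_bij by blast
  show "\<forall>i. lin_on sF (F i) (nscale sA) (N i) (phi i)"
    unfolding lin_on_def by (simp add: phi_N phi_add phi_scale)
  show "\<forall>i. \<forall>x\<in>F i. phi (i - 1) (dF x) = ndiff XI TAU delt alph i (phi i x)" using nd_main by blast
  show "\<forall>i j. \<forall>b\<in>Bc A i. \<forall>x\<in>F j. phi (i + j) (act b x) = nact mul i b (phi j x)" using phi_act by blast
qed

end

theorem lemma2p8:
  fixes sA :: "'r::comm_ring_1 \<Rightarrow> 'a::ab_group_add \<Rightarrow> 'a"
    and A :: "int \<Rightarrow> 'a set" and mul :: "'a \<Rightarrow> 'a \<Rightarrow> 'a" and one :: 'a and dA :: "'a \<Rightarrow> 'a"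
    and r :: "int \<Rightarrow> nat" and gam :: "int \<Rightarrow> nat \<Rightarrow> 'a" and t :: 'r
    and sF :: "'r \<Rightarrow> 'f::ab_group_add \<Rightarrow> 'f" and F :: "int \<Rightarrow> 'f set" and dF :: "'f \<Rightarrow> 'f"
    and act :: "'a \<times> 'a \<Rightarrow> 'f \<Rightarrow> 'f" and G :: "'f set"
  assumes "noetherian_ring_type TYPE('r)"
    and "dg_algebra sA A mul one dA"
    and "fixed_free_bases sA A r gam"
    and "dg_B_module sA A mul one dA t sF F dF act"
    and "bounded_below F"
    and "semi_basis A F act G"
  shows "\<exists>xi tau delta alpha \<phi>.
     (\<forall>i. lin_on (mscale sA) (Mset A F G i) (mscale sA) (Mset A F G (i - 1)) (xi i))
   \<and> (\<forall>i. lin_on (mscale sA) (Mset A F G i) (mscale sA) (Mset A F G i) (tau i))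
   \<and> (\<forall>i. lin_on (mscale sA) (Mset A F G i) (mscale sA) (Mset A F G (i - 2)) (delta i))
   \<and> (\<forall>i. lin_on (mscale sA) (Mset A F G i) (mscale sA) (Mset A F G (i - 1)) (alpha i))
   \<and> (\<forall>i. \<forall>m\<in>Mset A F G i. xi i m = - alpha i m)
   \<and> (\<forall>i. \<forall>m\<in>Mset A F G i. tau i m = mscale sA t m)
   \<and> (\<forall>i. \<forall>m\<in>Mset A F G i. alpha (i - 1) (alpha i m) = - mscale sA t (delta i m))
   \<and> (\<forall>i. \<forall>m\<in>Mset A F G (i + 1). delta i (alpha (i + 1) m) = alpha (i - 1) (delta (i + 1) m))
   \<and> (\<forall>i j. \<forall>s<r i. \<forall>m\<in>Mset A F G j.
        delta (i + j) (amul mul (gam i s) m) = amul mul (gam i s) (delta j m))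
   \<and> (\<forall>i j. \<forall>s<r i. \<forall>m\<in>Mset A F G j.
        alpha (i + j) (amul mul (gam i s) m)
          = amul mul (dA (gam i s)) m + alt i (amul mul (gam i s) (alpha j m)))
   \<and> (\<forall>i. bij_betw (\<phi> i) (F i) (Nset A F G i))
   \<and> (\<forall>i. lin_on sF (F i) (nscale sA) (Nset A F G i) (\<phi> i))
   \<and> (\<forall>i. \<forall>x\<in>F i. \<phi> (i - 1) (dF x) = ndiff xi tau delta alpha i (\<phi> i x))
   \<and> (\<forall>i j. \<forall>b\<in>Bc A i. \<forall>x\<in>F j. \<phi> (i + j) (act b x) = nact mul i b (\<phi> j x))"
proof -
  have LL: "L sA A mul one dA t sF F dF act G"
    unfolding L_def
    using assms(2,4,6) unfolding dg_algebra_def dg_B_module_def semi_basis_def graded_module_def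
    apply (elim conjE)
    apply (intro conjI)
    apply (assumption | blast)+
    done
  have mA: "module sA" using assms(2) by (simp add: dg_algebra_def graded_module_def)
  have gam: "\<And>i s. s < r i \<Longrightarrow> gam i s \<in> A i"
  proof -
    fix i s assume s: "s < r i"
    have "module.span sA (gam i ` {..<r i}) = A i" using assms(3) by (simp add: fixed_free_bases_def)
    moreover have "gam i s \<in> module.span sA (gam i ` {..<r i})"
      by (rule module.span_base[OF mA]) (use s in auto)
    ultimately show "gam i s \<in> A i" by simp
  qed
  show ?thesis by (rule L.main[OF LL gam])
qed

end
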